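(* Let $a_1,a_2\ge0$ and $D=D_{a_1,a_2}$. For any horizontal edge $h\in D_1$ and vertical edge $v_j\in D_2$ such that $h$ comes before $v_j$ along $D$ (traversed from $(0,0)$ to $(a_1,a_2)$), letting $hv_j$ be the subpath of $D$ from $h$ to $v_j$ inclusive, we have $$a_1\big(|(hv_j)_2|-1\big)<a_2\,|(hv_j)_1|.$$
   Context: $D=D_{a_1,a_2}$ is the maximal Dyck path: the lattice path of unit East and North steps from $(0,0)$ to $(a_1,a_2)$ staying weakly below the diagonal of the rectangle $[0,a_1]\times[0,a_2]$ and closest to it (every lattice point above $D$ is strictly above the diagonal). $D_1$ is its set of horizontal edges, $D_2=\{v_1,\dots,v_{a_2}\}$ its vertical edges, $v_j$ being the North step ending at $y$-coordinate $j$. For a subpath $P$, $(P)_1$ and $(P)_2$ denote its sets of horizontal and vertical edges. *)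

theory Defs
  imports Complex_Main
begin

text \<open>A lattice path from (0,0) is encoded as a list of unit steps:
  True = East (horizontal) step, False = North (vertical) step.
  Edge number k of the path is the k-th list entry (0-based).\<close>

text \<open>x-coordinate of the North step ending at height j in the maximal Dyck path:
  the least x with (x,j) weakly below the diagonal, i.e. ceiling (j*a1/a2).\<close>
definition dyck_col :: "nat \<Rightarrow> nat \<Rightarrow> nat \<Rightarrow> nat" where
  "dyck_col a1 a2 j = nat \<lceil>real j * real a1 / real a2\<rceil>"

definition max_dyck :: "nat \<Rightarrow> nat \<Rightarrow> bool list" where
  "max_dyck a1 a2 =
     concat (map (\<lambda>j. replicate (dyck_col a1 a2 j - dyck_col a1 a2 (j - 1)) True @ [False])
                 [1..<Suc a2])
     @ replicate (a1 - dyck_col a1 a2 a2) True"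

definition subpath :: "bool list \<Rightarrow> nat \<Rightarrow> nat \<Rightarrow> bool list" where
  "subpath P i k = take (Suc k - i) (drop i P)"

definition n_horiz :: "bool list \<Rightarrow> nat" where
  "n_horiz P = length (filter (\<lambda>s. s) P)"

definition n_vert :: "bool list \<Rightarrow> nat" where
  "n_vert P = length (filter (\<lambda>s. \<not> s) P)"

definition vert_edge :: "bool list \<Rightarrow> nat \<Rightarrow> nat" where
  "vert_edge P j = (THE k. k < length P \<and> \<not> P ! k \<and> n_vert (take (Suc k) P) = j)"

end

theory Submission
  imports Defs
begin

lemma nh_app[simp]: "n_horiz (xs @ ys) = n_horiz xs + n_horiz ys"
  by (simp add: n_horiz_def)
lemma nv_app[simp]: "n_vert (xs @ ys) = n_vert xs + n_vert ys"
  by (simp add: n_vert_def)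
lemma nh_rep[simp]: "n_horiz (replicate r True) = r" "n_horiz [] = 0"
  "n_horiz [False] = 0" "n_horiz [True] = 1"
  by (simp_all add: n_horiz_def)
lemma nv_rep[simp]: "n_vert (replicate r True) = 0" "n_vert [] = 0"
  "n_vert [False] = 1" "n_vert [True] = 0"
  by (simp_all add: n_vert_def)

lemma nv_take_mono: "m \<le> m' \<Longrightarrow> n_vert (take m P) \<le> n_vert (take m' P)"
proof -
  assume "m \<le> m'"
  then obtain d where "m' = m + d" by (metis le_add_diff_inverse)
  then show ?thesis by (simp add: take_add)
qed

lemma nv_exists:
  "j \<ge> 1 \<Longrightarrow> n_vert (take m P) \<ge> j \<Longrightarrow>
   \<exists>k. k < length P \<and> \<not> P ! k \<and> n_vert (take (Suc k) P) = j"
proof (induction m)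
  case 0 then show ?case by simp
next
  case (Suc m)
  show ?case
  proof (cases "n_vert (take m P) \<ge> j")
    case True then show ?thesis using Suc by blast
  next
    case False
    have ml: "m < length P"
    proof (rule ccontr)
      assume "\<not> m < length P"
      then have "take (Suc m) P = take m P" by simp
      then show False using Suc False by simp
    qed
    have ts: "take (Suc m) P = take m P @ [P ! m]" using ml by (simp add: take_Suc_conv_app_nth)
    show ?thesis
    proof (cases "P ! m")
      case True then show ?thesis using Suc False ts by simp
    next
      case F: False
      then have "n_vert (take (Suc m) P) = n_vert (take m P) + 1" using ts by simp
      then show ?thesis using Suc False ml F by (intro exI[of _ m]) auto
    qed
  qed
qed

lemma nv_unique:
  assumes "k < length P" "\<not> P ! k" "k' < length P" "\<not> P ! k'"
    "n_vert (take (Suc k) P) = n_vert (take (Suc k') P)"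
  shows "k = k'"
proof (rule ccontr)
  assume "k \<noteq> k'"
  { fix k k' assume a: "k < k'" "k' < length P" "\<not> P ! k'"
    have "take (Suc k') P = take k' P @ [P ! k']" using a by (simp add: take_Suc_conv_app_nth)
    then have "n_vert (take (Suc k') P) = n_vert (take k' P) + 1" using a by simp
    moreover have "n_vert (take (Suc k) P) \<le> n_vert (take k' P)" using a nv_take_mono by simp
    ultimately have "n_vert (take (Suc k) P) < n_vert (take (Suc k') P)" by simp }
  then show False using assms \<open>k \<noteq> k'\<close> by (metis less_irrefl nat_neq_iff)
qed

lemma dc_mono: "j \<le> j' \<Longrightarrow> dyck_col a1 a2 j \<le> dyck_col a1 a2 j'"
  unfolding dyck_col_def
  by (intro nat_mono ceiling_mono divide_right_mono mult_right_mono) auto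

lemma dc0[simp]: "dyck_col a1 a2 0 = 0" by (simp add: dyck_col_def)

definition LL :: "nat \<Rightarrow> nat \<Rightarrow> nat \<Rightarrow> bool list" where
  "LL a1 a2 n = concat (map (\<lambda>j. replicate (dyck_col a1 a2 j - dyck_col a1 a2 (j - 1)) True @ [False])
                 [1..<Suc n])"

lemma LL_Suc: "LL a1 a2 (Suc n) = LL a1 a2 n @
   (replicate (dyck_col a1 a2 (Suc n) - dyck_col a1 a2 n) True @ [False])"
  by (simp add: LL_def)

lemma LL_counts: "n_horiz (LL a1 a2 n) = dyck_col a1 a2 n \<and> n_vert (LL a1 a2 n) = n
   \<and> length (LL a1 a2 n) = dyck_col a1 a2 n + n"
proof (induction n)
  case 0 then show ?case by (simp add: LL_def)
next
  case (Suc n)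
  have "dyck_col a1 a2 n \<le> dyck_col a1 a2 (Suc n)" by (rule dc_mono) simp
  then show ?case using Suc by (simp add: LL_Suc)
qed

lemma LL_inv: "m < length (LL a1 a2 n) \<Longrightarrow>
  (LL a1 a2 n ! m \<longrightarrow> n_horiz (take m (LL a1 a2 n)) < dyck_col a1 a2 (n_vert (take m (LL a1 a2 n)) + 1)) \<and>
  (\<not> LL a1 a2 n ! m \<longrightarrow> n_horiz (take m (LL a1 a2 n)) = dyck_col a1 a2 (n_vert (take m (LL a1 a2 n)) + 1))"
proof (induction n arbitrary: m)
  case 0 then show ?case by (simp add: LL_def)
next
  case (Suc n)
  define d where "d = dyck_col a1 a2 (Suc n) - dyck_col a1 a2 n"
  have mono: "dyck_col a1 a2 n \<le> dyck_col a1 a2 (Suc n)" by (rule dc_mono) simp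
  have cnt: "n_horiz (LL a1 a2 n) = dyck_col a1 a2 n" "n_vert (LL a1 a2 n) = n"
     "length (LL a1 a2 n) = dyck_col a1 a2 n + n" using LL_counts by auto
  show ?case
  proof (cases "m < length (LL a1 a2 n)")
    case True
    then show ?thesis using Suc.IH[OF True] by (simp add: LL_Suc nth_append)
  next
    case False
    then obtain r where r: "m = length (LL a1 a2 n) + r" by (metis le_add_diff_inverse not_less)
    have rl: "r \<le> d" using Suc.prems r by (simp add: LL_Suc d_def[symmetric])
    have tk: "take m (LL a1 a2 (Suc n)) = LL a1 a2 n @ take r (replicate d True @ [False])"
      using r by (simp add: LL_Suc d_def[symmetric])
    have nk: "LL a1 a2 (Suc n) ! m = (replicate d True @ [False]) ! r"
      using r by (simp add: LL_Suc d_def[symmetric] nth_append)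
    have dd: "dyck_col a1 a2 n + d = dyck_col a1 a2 (Suc n)" using mono d_def by simp
    show ?thesis
    proof (cases "r < d")
      case True
      then have "take r (replicate d True @ [False]) = replicate r True"
        "(replicate d True @ [False]) ! r" by (simp_all add: nth_append)
      then show ?thesis using tk nk cnt dd True by simp
    next
      case F: False
      then have rd: "r = d" using rl by simp
      then have "take r (replicate d True @ [False]) = replicate d True"
        "\<not> (replicate d True @ [False]) ! r" by (simp_all add: nth_append)
      then show ?thesis using tk nk cnt dd by simp
    qed
  qed
qed

lemma dc_top: "a2 > 0 \<Longrightarrow> dyck_col a1 a2 a2 = a1"
  by (simp add: dyck_col_def)

lemma D_LL: "a2 > 0 \<Longrightarrow> max_dyck a1 a2 = LL a1 a2 a2"
  by (simp add: max_dyck_def LL_def dc_top)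

lemma dc_ge: "a2 > 0 \<Longrightarrow> real (dyck_col a1 a2 j) \<ge> real j * real a1 / real a2"
proof -
  have "real j * real a1 / real a2 \<le> real_of_int \<lceil>real j * real a1 / real a2\<rceil>"
    by (rule le_of_int_ceiling)
  moreover have "0 \<le> real j * real a1 / real a2" by simp
  then have "\<lceil>real j * real a1 / real a2\<rceil> \<ge> 0" by linarith
  ultimately show ?thesis unfolding dyck_col_def by simp
qed

lemma dc_lt: "real (dyck_col a1 a2 j) < real j * real a1 / real a2 + 1"
proof -
  have "real_of_int \<lceil>real j * real a1 / real a2\<rceil> < real j * real a1 / real a2 + 1"
    using ceiling_correct[of "real j * real a1 / real a2"] by linarith
  moreover have "0 \<le> real j * real a1 / real a2" by simp
  then have "\<lceil>real j * real a1 / real a2\<rceil> \<ge> 0" by linarith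
  ultimately show ?thesis unfolding dyck_col_def by simp
qed

theorem corollary3p3:
  fixes a1 a2 i j :: nat
  defines "D \<equiv> max_dyck a1 a2"
  assumes "j \<in> {1..a2}"
    and "i < length D" and "D ! i"
    and "i < vert_edge D j"
  shows "int a1 * (int (n_vert (subpath D i (vert_edge D j))) - 1)
           < int a2 * int (n_horiz (subpath D i (vert_edge D j)))"
proof -
  have a2: "a2 > 0" "1 \<le> j" "j \<le> a2" using assms(2) by auto
  have DL: "D = LL a1 a2 a2" using D_LL[OF a2(1)] D_def by simp
  have VD: "n_vert (take (length D) D) = a2" using LL_counts DL by simp
  have ex: "\<exists>k. k < length D \<and> \<not> D ! k \<and> n_vert (take (Suc k) D) = j"
    using nv_exists[of j "length D" D] a2 VD by simp
  define k where "k = vert_edge D j"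
  have ex1: "\<exists>!k. k < length D \<and> \<not> D ! k \<and> n_vert (take (Suc k) D) = j"
    using ex nv_unique by blast
  have kp: "k < length D" "\<not> D ! k" "n_vert (take (Suc k) D) = j"
    using theI'[OF ex1] unfolding k_def vert_edge_def by auto
  have ik: "i < k" using assms(5) k_def by simp
  have tk: "take (Suc k) D = take k D @ [D ! k]" using kp by (simp add: take_Suc_conv_app_nth)
  have Vk: "n_vert (take k D) + 1 = j" using tk kp by simp
  have Hk: "n_horiz (take (Suc k) D) = dyck_col a1 a2 j"
    using LL_inv[of k a1 a2 a2] kp tk Vk DL by simp
  have Hi: "n_horiz (take i D) < dyck_col a1 a2 (n_vert (take i D) + 1)"
    using LL_inv[of i a1 a2 a2] assms(3,4) DL by simp
  have Vi: "n_vert (take i D) \<le> n_vert (take k D)" using ik nv_take_mono by simp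
  have sp: "take (Suc k) D = take i D @ subpath D i k"
    unfolding subpath_def using ik by (simp add: take_drop min_def) (metis append_take_drop_id less_imp_le_nat le_SucI take_take min_absorb1)
  have nh: "n_horiz (take (Suc k) D) = n_horiz (take i D) + n_horiz (subpath D i k)"
    using sp by (metis nh_app)
  have nv: "n_vert (take (Suc k) D) = n_vert (take i D) + n_vert (subpath D i k)"
    using sp by (metis nv_app)
  define x where "x = n_horiz (take i D)"
  define v where "v = n_vert (take i D)"
  have hx: "n_horiz (subpath D i k) = dyck_col a1 a2 j - x" using nh Hk x_def by simp
  have vx: "n_vert (subpath D i k) = j - v" using nv kp v_def by simp
  have vj: "v + 1 \<le> j" using Vi Vk v_def by simp
  have xc: "x < dyck_col a1 a2 (v+1)" using Hi x_def v_def by simp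
  have cj: "dyck_col a1 a2 (v+1) \<le> dyck_col a1 a2 j" using dc_mono vj by blast
  have r1: "real x + 1 < real (v+1) * real a1 / real a2 + 1"
    using dc_lt[of a1 a2 "v+1"] xc by linarith
  have r2: "real j * real a1 / real a2 \<le> real (dyck_col a1 a2 j)" using dc_ge a2 by blast
  have e1: "real x * real a2 < real (v+1) * real a1"
    using r1 a2(1) by (simp add: field_simps)
  have e2: "real j * real a1 \<le> real (dyck_col a1 a2 j) * real a2"
    using r2 a2(1) by (simp add: field_simps)
  have "real a2 * (real (dyck_col a1 a2 j) - real x) > (real j - real (v+1)) * real a1"
    using e1 e2 by (simp add: algebra_simps)
  then have "real a1 * (real j - real v - 1) < real a2 * (real (dyck_col a1 a2 j) - real x)"
    by (simp add: algebra_simps)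
  then have "real_of_int (int a1 * (int (j - v) - 1)) < real_of_int (int a2 * int (dyck_col a1 a2 j - x))"
    using vj xc cj by (simp add: of_nat_diff)
  then have "int a1 * (int (j - v) - 1) < int a2 * int (dyck_col a1 a2 j - x)"
    by linarith
  then show ?thesis using hx vx k_def by simp
qed

end
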